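(* Each of the axioms (A1), (A3), (A4) is independent of the other two in the presence of (A2). Specifically: (a) The rule $C_\lambda(R)=\sum_i\frac{\lambda_i}{\bar\lambda}R_i$ satisfies (A1), (A2), (A3) but not (A4). (b) The rule defined by $C_\lambda(R)=q^{-1}\!\left(\frac{\sum_i\lambda_iq(R_i)}{\sum_i\lambda_i}\right)$ when $n\in\{1,2\}$ and $C_\lambda(R)=\frac{\sum_i\lambda_iR_i}{\sum_i\lambda_i}$ when $n\ge3$ satisfies (A1), (A2), (A4) but not (A3). (c) Fix $\eta>0$; with $w_i=\lambda_i/\bar\lambda$ and Shannon entropy $H(w)=-\sum_iw_i\log w_i$ (natural logarithm), the rule $C_\lambda(R)=q^{-1}\!\left(\sum_iw_iq(R_i)+\eta H(w)\right)$ satisfies (A2), (A3), (A4) but not (A1).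
   Context: Let $q(r)=10^{r/400}$, $q^{-1}(s)=400\log_{10}s$ ($s>0$), and $E(a,b)=1/(1+10^{(b-a)/400})$. A combined rating rule assigns to every $n\ge1$ and every $\lambda\in(0,\infty)^n$ a function $C_\lambda:\mathbb{R}^n\to\mathbb{R}$. Write $\bar\lambda=\sum_i\lambda_i$; for nonempty $B\subseteq\{1,\dots,n\}$, $R_B=(R_i)_{i\in B}$, $\lambda_B=(\lambda_i)_{i\in B}$ (inherited increasing order), $\bar\lambda_B=\sum_{i\in B}\lambda_i$; $\mathbf 1$ is the all-ones vector. (A1) Same-scale normalization: $C_\lambda(r\mathbf 1)=r$ for all $\lambda$ and $r\in\mathbb{R}$. (A2) Regularity and monotonicity: for each $n$, $(\lambda,R)\mapsto C_\lambda(R)$ is continuous on $(0,\infty)^n\times\mathbb{R}^n$; for each fixed $\lambda$, $C_\lambda$ is continuously differentiable with $\partial_iC_\lambda(R)>0$ for all $i$, $R$. (A3) Recursive consistency: for every ordered partition $(B_1,\dots,B_m)$ of $\{1,\dots,n\}$ into nonempty blocks, $C_\lambda(R)=C_{(\bar\lambda_{B_1},\dots,\bar\lambda_{B_m})}\big(C_{\lambda_{B_1}}(R_{B_1}),\dots,C_{\lambda_{B_m}}(R_{B_m})\big)$. (A4) Marginal Elo-strength consistency: for all $x,y\in\mathbb{R}$, $\partial_xC_{(1,1)}(x,y)/\partial_yC_{(1,1)}(x,y)=E(x,y)/(1-E(x,y))=10^{(x-y)/400}$. *)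

theory Defs
  imports "HOL-Analysis.Analysis"
begin

definition q :: "real \<Rightarrow> real" where
  "q r = 10 powr (r / 400)"

definition qinv :: "real \<Rightarrow> real" where
  "qinv s = 400 * log 10 s"

definition E :: "real \<Rightarrow> real \<Rightarrow> real" where
  "E a b = 1 / (1 + 10 powr ((b - a) / 400))"

text \<open>A combined rating rule: for weights lam (a list of length n) and ratings R
  (a list of length n) it returns C lam R. Only arguments with n \<ge> 1,
  length lam = length R = n and all weights positive are relevant.\<close>
type_synonym rule = "real list \<Rightarrow> real list \<Rightarrow> real"

definition admissible :: "nat \<Rightarrow> real list \<Rightarrow> bool" where
  "admissible n lam \<longleftrightarrow> n \<ge> 1 \<and> length lam = n \<and> (\<forall>x\<in>set lam. x > 0)"

definition close :: "real \<Rightarrow> real list \<Rightarrow> real list \<Rightarrow> bool" where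
  "close d xs ys \<longleftrightarrow> (\<forall>i<length xs. \<bar>xs ! i - ys ! i\<bar> < d)"

definition pderiv_rule :: "rule \<Rightarrow> real list \<Rightarrow> real list \<Rightarrow> nat \<Rightarrow> real" where
  "pderiv_rule C lam R i = deriv (\<lambda>t. C lam (R[i := t])) (R ! i)"

definition A1 :: "rule \<Rightarrow> bool" where
  "A1 C \<longleftrightarrow> (\<forall>n lam r. admissible n lam \<longrightarrow> C lam (replicate n r) = r)"

text \<open>(A2): joint continuity of (lam,R) \<mapsto> C lam R on (0,\<infinity>)^n \<times> \<real>^n (product topology,
  written in epsilon-delta form with the max-norm), and for fixed lam continuous
  differentiability (existence and continuity of all partial derivatives) with
  positive partial derivatives.\<close>
definition A2 :: "rule \<Rightarrow> bool" where
  "A2 C \<longleftrightarrow>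
     (\<forall>n lam R. admissible n lam \<and> length R = n \<longrightarrow>
        (\<forall>e>0. \<exists>d>0. \<forall>lam' R'. admissible n lam' \<and> length R' = n \<and>
             close d lam lam' \<and> close d R R' \<longrightarrow> \<bar>C lam' R' - C lam R\<bar> < e))
   \<and> (\<forall>n lam R i. admissible n lam \<and> length R = n \<and> i < n \<longrightarrow>
        (\<lambda>t. C lam (R[i := t])) differentiable (at (R ! i))
        \<and> pderiv_rule C lam R i > 0
        \<and> (\<forall>e>0. \<exists>d>0. \<forall>R'. length R' = n \<and> close d R R' \<longrightarrow>
               \<bar>pderiv_rule C lam R' i - pderiv_rule C lam R i\<bar> < e))"

definition ordered_partition :: "nat \<Rightarrow> nat list list \<Rightarrow> bool" where
  "ordered_partition n Bs \<longleftrightarrow>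
     (\<forall>B\<in>set Bs. B \<noteq> [] \<and> sorted_wrt (<) B)
     \<and> distinct (concat Bs) \<and> set (concat Bs) = {..<n}"

definition A3 :: "rule \<Rightarrow> bool" where
  "A3 C \<longleftrightarrow> (\<forall>n lam R Bs. admissible n lam \<and> length R = n \<and> ordered_partition n Bs \<longrightarrow>
      C lam R =
      C (map (\<lambda>B. sum_list (map ((!) lam) B)) Bs)
        (map (\<lambda>B. C (map ((!) lam) B) (map ((!) R) B)) Bs))"

definition A4 :: "rule \<Rightarrow> bool" where
  "A4 C \<longleftrightarrow> (\<forall>x y::real. \<exists>a b.
      ((\<lambda>t. C [1, 1] [t, y]) has_real_derivative a) (at x)
    \<and> ((\<lambda>s. C [1, 1] [x, s]) has_real_derivative b) (at y)
    \<and> a / b = E x y / (1 - E x y)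
    \<and> E x y / (1 - E x y) = 10 powr ((x - y) / 400))"

definition lin_rule :: rule where
  "lin_rule lam R = (\<Sum>i<length R. lam ! i / sum_list lam * R ! i)"

definition mixed_rule :: rule where
  "mixed_rule lam R =
     (if length R \<in> {1, 2}
      then qinv ((\<Sum>i<length R. lam ! i * q (R ! i)) / sum_list lam)
      else (\<Sum>i<length R. lam ! i * R ! i) / sum_list lam)"

definition entropy_rule :: "real \<Rightarrow> rule" where
  "entropy_rule \<eta> lam R =
     (let w = (\<lambda>i. lam ! i / sum_list lam);
          H = - (\<Sum>i<length R. w i * ln (w i))
      in qinv ((\<Sum>i<length R. w i * q (R ! i)) + \<eta> * H))"

end

theory Submission
  imports Defs
begin

lemma sum_list_map_nth: "sum_list (map f B) = (\<Sum>j<length B. f (B!j))"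
  by (simp add: sum_list_sum_nth atLeast0LessThan)

lemma part_sum:
  assumes "ordered_partition n Bs"
  shows "(\<Sum>i<n. f i) = sum_list (map (\<lambda>B. sum_list (map f B)) Bs)"
proof -
  have d: "distinct (concat Bs)" and s: "set (concat Bs) = {..<n}"
    using assms by (auto simp: ordered_partition_def)
  have "(\<Sum>i<n. f i) = sum_list (map f (concat Bs))"
    using sum_list_distinct_conv_sum_set[OF d, of f] s by simp
  also have "\<dots> = sum_list (map (\<lambda>B. sum_list (map f B)) Bs)"
    by (induct Bs) auto
  finally show ?thesis .
qed

lemma sum_upd:
  assumes "i < n" "length R = n"
  shows "(\<Sum>k<n. h k (R[i:=t]!k)) = h i t + (\<Sum>k\<in>{..<n}-{i}. h k (R!k))"
proof -
  have "(\<Sum>k<n. h k (R[i:=t]!k)) = h i (R[i:=t]!i) + (\<Sum>k\<in>{..<n}-{i}. h k (R[i:=t]!k))"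
    using assms by (subst sum.remove[of _ i]) auto
  also have "(\<Sum>k\<in>{..<n}-{i}. h k (R[i:=t]!k)) = (\<Sum>k\<in>{..<n}-{i}. h k (R!k))"
    using assms by (intro sum.cong) (auto simp: nth_list_update)
  finally show ?thesis using assms by simp
qed

lemma q_exp: "q t = exp (t * ln 10 / 400)"
  by (simp add: q_def powr_def)
lemma q_pos: "q t > 0" by (simp add: q_def)
lemma q_qinv: "s > 0 \<Longrightarrow> q (qinv s) = s"
  by (simp add: q_def qinv_def)
lemma qinv_q: "qinv (q r) = r"
  by (simp add: q_def qinv_def log_powr)
lemma DERIV_q: "(q has_real_derivative q t * ln 10 / 400) (at t)"
  unfolding q_exp[abs_def] by (auto intro!: derivative_eq_intros)
lemma DERIV_qinv: assumes "s > 0" shows "(qinv has_real_derivative 400 / (ln 10 * s)) (at s)"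
proof -
  have "((\<lambda>y. 400 * log 10 y) has_real_derivative 400 * (1 / (ln 10 * s))) (at s)"
    by (rule DERIV_cmult[OF DERIV_log[OF assms]])
  then show ?thesis unfolding qinv_def[abs_def] by simp
qed

definition NumG :: "real \<Rightarrow> real list \<Rightarrow> real list \<Rightarrow> real" where
  "NumG \<eta> lam R = (\<Sum>k<length R. lam!k * (q (R!k) + \<eta> * (ln (sum_list lam) - ln (lam!k))))"

definition Gq :: "real \<Rightarrow> rule" where
  "Gq \<eta> lam R = qinv (NumG \<eta> lam R / sum_list lam)"

lemma lin_form: "lin_rule lam R = (\<Sum>k<length R. lam!k * R!k) / sum_list lam"
  by (simp add: lin_rule_def sum_divide_distrib)

lemma mixed_12: "length R \<in> {1,2} \<Longrightarrow> mixed_rule lam R = Gq 0 lam R"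
  by (simp add: mixed_rule_def Gq_def NumG_def)

lemma mixed_3: "length R \<notin> {1,2} \<Longrightarrow> mixed_rule lam R = lin_rule lam R"
  unfolding mixed_rule_def lin_form by simp

lemma sum_list_pos_adm:
  assumes "admissible n lam" shows "sum_list lam > 0"
proof -
  have "sum_list lam = (\<Sum>k<length lam. lam!k)" by (rule sum_list_map_nth[of id, simplified])
  also have "\<dots> > 0" using assms unfolding admissible_def
    by (intro sum_pos) (auto simp: lessThan_empty_iff)
  finally show ?thesis .
qed

lemma adm_le_sum: "admissible n lam \<Longrightarrow> k < n \<Longrightarrow> lam!k \<le> sum_list lam"
  unfolding admissible_def
  by (intro member_le_sum_list) auto

lemma entropy_form:
  assumes "admissible n lam" "length R = n"
  shows "entropy_rule \<eta> lam R = Gq \<eta> lam R"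
proof -
  define S where "S = sum_list lam"
  have S: "S > 0" using sum_list_pos_adm[OF assms(1)] S_def by simp
  have lk: "k < n \<Longrightarrow> lam!k > 0" for k using assms(1) unfolding admissible_def by auto
  have H: "- (\<Sum>k<n. lam!k / S * ln (lam!k / S)) = (\<Sum>k<n. lam!k / S * (ln S - ln (lam!k)))"
    by (subst sum_negf[symmetric], intro sum.cong) (auto simp: ln_div lk S field_simps)
  have "(\<Sum>k<n. lam!k / S * q (R!k)) + \<eta> * (\<Sum>k<n. lam!k / S * (ln S - ln (lam!k)))
      = (\<Sum>k<n. lam!k * (q (R!k) + \<eta> * (ln S - ln (lam!k)))) / S"
    unfolding sum_divide_distrib sum_distrib_left sum.distrib[symmetric]
    by (intro sum.cong refl) (simp add: distrib_left add_divide_distrib mult.left_commute)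
  then show ?thesis using H unfolding entropy_rule_def Gq_def NumG_def Let_def
    by (simp add: assms(2) S_def)
qed

lemma NumG_pos:
  assumes "\<eta> \<ge> 0" "admissible n lam" "length R = n"
  shows "NumG \<eta> lam R > 0"
  unfolding NumG_def
proof (intro sum_pos)
  show "finite {..<length R}" by simp
  show "{..<length R} \<noteq> {}" using assms unfolding admissible_def by (auto simp: lessThan_empty_iff)
  fix k assume "k \<in> {..<length R}"
  then have k: "k < n" using assms by simp
  have "lam!k > 0" using assms(2) k unfolding admissible_def by auto
  moreover have "ln (lam!k) \<le> ln (sum_list lam)"
    using adm_le_sum[OF assms(2) k] \<open>lam!k > 0\<close> by simp
  ultimately show "0 < lam ! k * (q (R ! k) + \<eta> * (ln (sum_list lam) - ln (lam ! k)))"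
    using q_pos[of "R!k"] assms(1) by (intro mult_pos_pos) (auto intro: add_pos_nonneg)
qed

lemma q_Gq: "\<eta> \<ge> 0 \<Longrightarrow> admissible n lam \<Longrightarrow> length R = n \<Longrightarrow> q (Gq \<eta> lam R) = NumG \<eta> lam R / sum_list lam"
  unfolding Gq_def using NumG_pos sum_list_pos_adm by (simp add: q_qinv)

lemma block_facts:
  assumes "ordered_partition n Bs" "admissible n lam" "B \<in> set Bs"
  shows "admissible (length B) (map ((!) lam) B)" "distinct B" "set B \<subseteq> {..<n}"
proof -
  show d: "distinct B" using assms unfolding ordered_partition_def
    by (auto simp: distinct_concat_iff)
  show s: "set B \<subseteq> {..<n}" using assms unfolding ordered_partition_def by auto
  show "admissible (length B) (map ((!) lam) B)"
    using assms s unfolding ordered_partition_def admissible_def by (auto simp: Suc_le_eq)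
qed

lemma sum_list_set: "distinct B \<Longrightarrow> sum_list (map f B) = sum f (set B)"
  by (rule sum_list_distinct_conv_sum_set)

lemma top_sum:
  assumes "ordered_partition n Bs" "admissible n lam"
  shows "sum_list (map (\<lambda>B. sum_list (map ((!) lam) B)) Bs) = sum_list lam"
proof -
  have "sum_list lam = (\<Sum>k<n. lam!k)" using assms(2) unfolding admissible_def
    using sum_list_map_nth[of id lam] by simp
  then show ?thesis using part_sum[OF assms(1), of "(!) lam"] by simp
qed

lemma nth_sum_map: "(\<Sum>k<length (map g Bs). F (map h Bs ! k) (map g Bs ! k)) = sum_list (map (\<lambda>B. F (h B) (g B)) Bs)"
  by (simp add: sum_list_map_nth)

lemma Gq_A3:
  assumes eta: "\<eta> \<ge> 0" and adm: "admissible n lam" and len: "length R = n"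
    and P: "ordered_partition n Bs"
  shows "Gq \<eta> lam R = Gq \<eta> (map (\<lambda>B. sum_list (map ((!) lam) B)) Bs)
        (map (\<lambda>B. Gq \<eta> (map ((!) lam) B) (map ((!) R) B)) Bs)"
proof -
  define S where "S = sum_list lam"
  define SB where "SB B = sum_list (map ((!) lam) B)" for B
  define CB where "CB B = Gq \<eta> (map ((!) lam) B) (map ((!) R) B)" for B
  define f where "f k = lam!k * (q (R!k) + \<eta> * (ln S - ln (lam!k)))" for k
  have Stop: "sum_list (map SB Bs) = S" using top_sum[OF P adm] unfolding SB_def S_def by simp
  have blk: "SB B * (q (CB B) + \<eta> * (ln S - ln (SB B))) = sum_list (map f B)" if B: "B \<in> set Bs" for B
  proof -
    note bf = block_facts[OF P adm B]
    have SBpos: "SB B > 0" using sum_list_pos_adm[OF bf(1)] SB_def by simp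
    have SBs: "SB B = (\<Sum>k\<in>set B. lam!k)" unfolding SB_def using sum_list_set[OF bf(2), of "(!) lam"] by simp
    have Num: "NumG \<eta> (map ((!) lam) B) (map ((!) R) B) = (\<Sum>k\<in>set B. lam!k * (q (R!k) + \<eta> * (ln (SB B) - ln (lam!k))))"
      unfolding NumG_def SB_def[symmetric]
      by (subst sum_list_set[OF bf(2), symmetric], simp add: sum_list_map_nth)
    have qC: "q (CB B) = NumG \<eta> (map ((!) lam) B) (map ((!) R) B) / SB B"
      unfolding CB_def SB_def using q_Gq[OF eta bf(1)] by simp
    have "SB B * (q (CB B) + \<eta> * (ln S - ln (SB B))) = NumG \<eta> (map ((!) lam) B) (map ((!) R) B) + (\<Sum>k\<in>set B. lam!k) * (\<eta> * (ln S - ln (SB B)))"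
      using SBpos qC SBs by (simp add: field_simps)
    also have "\<dots> = (\<Sum>k\<in>set B. f k)"
      unfolding Num f_def sum_distrib_right sum.distrib[symmetric]
      by (intro sum.cong) (auto simp: algebra_simps)
    finally show ?thesis using sum_list_set[OF bf(2), of f] by simp
  qed
  have "NumG \<eta> (map SB Bs) (map CB Bs) = sum_list (map (\<lambda>B. SB B * (q (CB B) + \<eta> * (ln S - ln (SB B)))) Bs)"
    unfolding NumG_def Stop by (simp add: sum_list_map_nth)
  also have "\<dots> = sum_list (map (\<lambda>B. sum_list (map f B)) Bs)"
    using blk by (intro arg_cong[where f=sum_list] map_cong) auto
  also have "\<dots> = (\<Sum>k<n. f k)" using part_sum[OF P, of f] by simp
  also have "\<dots> = NumG \<eta> lam R" unfolding NumG_def f_def S_def len ..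
  finally have N: "NumG \<eta> (map SB Bs) (map CB Bs) = NumG \<eta> lam R" .
  have "Gq \<eta> lam R = Gq \<eta> (map SB Bs) (map CB Bs)"
    unfolding Gq_def N Stop S_def ..
  then show ?thesis unfolding SB_def[abs_def] CB_def[abs_def] .
qed


lemma lin_A3:
  assumes adm: "admissible n lam" and len: "length R = n" and P: "ordered_partition n Bs"
  shows "lin_rule lam R = lin_rule (map (\<lambda>B. sum_list (map ((!) lam) B)) Bs)
        (map (\<lambda>B. lin_rule (map ((!) lam) B) (map ((!) R) B)) Bs)"
proof -
  define S where "S = sum_list lam"
  define SB where "SB B = sum_list (map ((!) lam) B)" for B
  define CB where "CB B = lin_rule (map ((!) lam) B) (map ((!) R) B)" for B
  define g where "g k = lam!k * R!k" for k
  have Stop: "sum_list (map SB Bs) = S" using top_sum[OF P adm] unfolding SB_def S_def by simp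
  have blk: "SB B * CB B = sum_list (map g B)" if B: "B \<in> set Bs" for B
  proof -
    note bf = block_facts[OF P adm B]
    have SBpos: "SB B > 0" using sum_list_pos_adm[OF bf(1)] SB_def by simp
    have "CB B = sum_list (map g B) / SB B"
      unfolding CB_def lin_form SB_def g_def by (simp add: sum_list_map_nth)
    then show ?thesis using SBpos by simp
  qed
  have "lin_rule (map SB Bs) (map CB Bs) = sum_list (map (\<lambda>B. SB B * CB B) Bs) / S"
    unfolding lin_form Stop by (simp add: sum_list_map_nth)
  also have "\<dots> = sum_list (map (\<lambda>B. sum_list (map g B)) Bs) / S"
    using blk by (intro arg_cong[where f="\<lambda>x. sum_list x / S"] map_cong) auto
  also have "\<dots> = (\<Sum>k<n. g k) / S" using part_sum[OF P, of g] by simp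
  also have "\<dots> = lin_rule lam R" unfolding lin_form g_def S_def len ..
  finally show ?thesis unfolding SB_def[abs_def] CB_def[abs_def] by simp
qed

lemma sum_adm: "admissible n lam \<Longrightarrow> (\<Sum>k<n. lam!k) = sum_list lam"
  unfolding admissible_def using sum_list_map_nth[of id lam] by simp

lemma lin_A1: "admissible n lam \<Longrightarrow> lin_rule lam (replicate n r) = r"
  unfolding lin_form using sum_list_pos_adm[of n lam] sum_adm[of n lam]
  by (simp add: sum_distrib_right[symmetric])

lemma Gq0_A1: "admissible n lam \<Longrightarrow> Gq 0 lam (replicate n r) = r"
  unfolding Gq_def NumG_def using sum_list_pos_adm[of n lam] sum_adm[of n lam]
  by (simp add: sum_distrib_right[symmetric] qinv_q)

lemma lin_deriv:
  assumes adm: "admissible n lam" and len: "length R = n" and i: "i < n"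
  shows "((\<lambda>t. lin_rule lam (R[i:=t])) has_real_derivative lam!i / sum_list lam) (at x)"
proof -
  define K where "K = (\<Sum>k\<in>{..<n}-{i}. lam!k * R!k)"
  have "(\<lambda>t. lin_rule lam (R[i:=t])) = (\<lambda>t. (lam!i * t + K) / sum_list lam)"
    unfolding lin_form K_def using sum_upd[OF i len, of "\<lambda>k v. lam!k * v"] len by simp
  moreover have "((\<lambda>t. (lam!i * t + K) / sum_list lam) has_real_derivative lam!i / sum_list lam) (at x)"
    using sum_list_pos_adm[OF adm] by (auto intro!: derivative_eq_intros)
  ultimately show ?thesis by simp
qed

definition DG :: "real \<Rightarrow> real list \<Rightarrow> real list \<Rightarrow> nat \<Rightarrow> real" where
  "DG \<eta> lam R i = lam!i * q (R!i) / NumG \<eta> lam R"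

lemma Gq_deriv:
  assumes eta: "\<eta> \<ge> 0" and adm: "admissible n lam" and len: "length R = n" and i: "i < n"
  shows "((\<lambda>t. Gq \<eta> lam (R[i:=t])) has_real_derivative DG \<eta> lam R i) (at (R!i))"
proof -
  define S where "S = sum_list lam"
  define h where "h k v = lam!k * (q v + \<eta> * (ln S - ln (lam!k)))" for k v
  define K where "K = (\<Sum>k\<in>{..<n}-{i}. h k (R!k))"
  have N: "NumG \<eta> lam (R[i:=t]) = h i t + K" for t
    unfolding NumG_def K_def h_def S_def using sum_upd[OF i len, of "\<lambda>k v. lam!k * (q v + \<eta> * (ln (sum_list lam) - ln (lam!k)))"] len
    by simp
  have N0: "NumG \<eta> lam R = h i (R!i) + K" using N[of "R!i"] by simp
  have Npos: "NumG \<eta> lam R > 0" by (rule NumG_pos[OF eta adm len])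
  have Spos: "S > 0" using sum_list_pos_adm[OF adm] S_def by simp
  have f: "(\<lambda>t. Gq \<eta> lam (R[i:=t])) = (\<lambda>t. qinv ((h i t + K) / S))"
    unfolding Gq_def N S_def ..
  have inner: "((\<lambda>t. (h i t + K) / S) has_real_derivative (lam!i * (q (R!i) * ln 10 / 400)) / S) (at (R!i))"
    unfolding h_def using Spos by (auto intro!: derivative_eq_intros DERIV_q)
  have outer: "(qinv has_real_derivative 400 / (ln 10 * ((h i (R!i) + K) / S))) (at ((h i (R!i) + K) / S))"
    by (rule DERIV_qinv) (use Npos Spos N0 in simp)
  have "((\<lambda>t. qinv ((h i t + K) / S)) has_real_derivative
      400 / (ln 10 * ((h i (R!i) + K) / S)) * ((lam!i * (q (R!i) * ln 10 / 400)) / S)) (at (R!i))"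
    by (rule DERIV_chain2[OF outer inner])
  moreover have "400 / (ln 10 * ((h i (R!i) + K) / S)) * ((lam!i * (q (R!i) * ln 10 / 400)) / S) = DG \<eta> lam R i"
    unfolding DG_def N0[symmetric] using Npos Spos by (simp add: field_simps)
  ultimately show ?thesis unfolding f by simp
qed


definition nbhd :: "nat \<Rightarrow> real list \<Rightarrow> real list \<Rightarrow> (real list \<times> real list) filter" where
  "nbhd n lam R = (INF d\<in>{0<..}. principal {x. admissible n (fst x) \<and> length (snd x) = n
      \<and> close d lam (fst x) \<and> close d R (snd x)})"

lemma close_mono: "close a xs ys \<Longrightarrow> a \<le> b \<Longrightarrow> close b xs ys"
  unfolding close_def by force

lemma close_refl: "d > 0 \<Longrightarrow> close d xs xs"
  unfolding close_def by simp

lemma eventually_nbhd: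
  "eventually P (nbhd n lam R) \<longleftrightarrow> (\<exists>d>0. \<forall>x. admissible n (fst x) \<and> length (snd x) = n
      \<and> close d lam (fst x) \<and> close d R (snd x) \<longrightarrow> P x)"
  unfolding nbhd_def
proof (subst eventually_INF_base)
  show "{0::real<..} \<noteq> {}" by auto
next
  fix a b :: real assume "a \<in> {0<..}" "b \<in> {0<..}"
  then show "\<exists>c\<in>{0<..}. principal {x. admissible n (fst x) \<and> length (snd x) = n \<and> close c lam (fst x) \<and> close c R (snd x)}
        \<le> inf (principal {x. admissible n (fst x) \<and> length (snd x) = n \<and> close a lam (fst x) \<and> close a R (snd x)})
              (principal {x. admissible n (fst x) \<and> length (snd x) = n \<and> close b lam (fst x) \<and> close b R (snd x)})"
    by (intro bexI[of _ "min a b"]) (auto intro: close_mono)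
next
  show "(\<exists>b\<in>{0<..}. eventually P (principal {x. admissible n (fst x) \<and> length (snd x) = n \<and> close b lam (fst x) \<and> close b R (snd x)})) =
    (\<exists>d>0. \<forall>x. admissible n (fst x) \<and> length (snd x) = n \<and> close d lam (fst x) \<and> close d R (snd x) \<longrightarrow> P x)"
    by (auto simp: eventually_principal)
qed

lemma nbhd_fst:
  assumes "i < length lam" shows "((\<lambda>x. fst x ! i) \<longlongrightarrow> lam!i) (nbhd n lam R)"
  unfolding tendsto_iff eventually_nbhd
proof (intro allI impI)
  fix e :: real assume "e > 0"
  then show "\<exists>d>0. \<forall>x. admissible n (fst x) \<and> length (snd x) = n \<and> close d lam (fst x) \<and> close d R (snd x)
      \<longrightarrow> dist (fst x ! i) (lam ! i) < e"
    using assms by (intro exI[of _ e]) (auto simp: close_def dist_real_def abs_minus_commute)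
qed

lemma nbhd_snd:
  assumes "i < length R" shows "((\<lambda>x. snd x ! i) \<longlongrightarrow> R!i) (nbhd n lam R)"
  unfolding tendsto_iff eventually_nbhd
proof (intro allI impI)
  fix e :: real assume "e > 0"
  then show "\<exists>d>0. \<forall>x. admissible n (fst x) \<and> length (snd x) = n \<and> close d lam (fst x) \<and> close d R (snd x)
      \<longrightarrow> dist (snd x ! i) (R ! i) < e"
    using assms by (intro exI[of _ e]) (auto simp: close_def dist_real_def abs_minus_commute)
qed

lemma nbhd_ev: "eventually (\<lambda>x. admissible n (fst x) \<and> length (snd x) = n) (nbhd n lam R)"
  unfolding eventually_nbhd by (intro exI[of _ 1]) auto

lemma cont_from_tendsto:
  fixes C :: rule
  assumes "((\<lambda>x. C (fst x) (snd x)) \<longlongrightarrow> C lam R) (nbhd n lam R)"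
  shows "\<forall>e>0. \<exists>d>0. \<forall>lam' R'. admissible n lam' \<and> length R' = n \<and> close d lam lam' \<and> close d R R'
           \<longrightarrow> \<bar>C lam' R' - C lam R\<bar> < e"
proof (intro allI impI)
  fix e :: real assume "e > 0"
  with assms have "eventually (\<lambda>x. dist (C (fst x) (snd x)) (C lam R) < e) (nbhd n lam R)"
    unfolding tendsto_iff by blast
  then obtain d where "d > 0" and d: "\<And>x. admissible n (fst x) \<and> length (snd x) = n \<and> close d lam (fst x) \<and> close d R (snd x)
      \<Longrightarrow> dist (C (fst x) (snd x)) (C lam R) < e"
    unfolding eventually_nbhd by blast
  show "\<exists>d>0. \<forall>lam' R'. admissible n lam' \<and> length R' = n \<and> close d lam lam' \<and> close d R R'
           \<longrightarrow> \<bar>C lam' R' - C lam R\<bar> < e"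
    using \<open>d > 0\<close> d[of "(lam', R')" for lam' R'] by (intro exI[of _ d]) (auto simp: dist_real_def)
qed

lemma dcont_from_tendsto:
  fixes D :: rule
  assumes "admissible n lam" "((\<lambda>x. D (fst x) (snd x)) \<longlongrightarrow> D lam R) (nbhd n lam R)"
  shows "\<forall>e>0. \<exists>d>0. \<forall>R'. length R' = n \<and> close d R R' \<longrightarrow> \<bar>D lam R' - D lam R\<bar> < e"
proof (intro allI impI)
  fix e :: real assume "e > 0"
  from cont_from_tendsto[OF assms(2)] \<open>e > 0\<close> obtain d where "d > 0" and
    d: "\<And>lam' R'. admissible n lam' \<and> length R' = n \<and> close d lam lam' \<and> close d R R' \<Longrightarrow> \<bar>D lam' R' - D lam R\<bar> < e"
    by blast
  show "\<exists>d>0. \<forall>R'. length R' = n \<and> close d R R' \<longrightarrow> \<bar>D lam R' - D lam R\<bar> < e"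
    using \<open>d > 0\<close> d[of lam] assms(1) close_refl[OF \<open>d > 0\<close>, of lam] by blast
qed

definition cont_pt :: "rule \<Rightarrow> nat \<Rightarrow> real list \<Rightarrow> real list \<Rightarrow> bool" where
  "cont_pt C n lam R \<longleftrightarrow> (\<forall>e>0. \<exists>d>0. \<forall>lam' R'. admissible n lam' \<and> length R' = n \<and>
             close d lam lam' \<and> close d R R' \<longrightarrow> \<bar>C lam' R' - C lam R\<bar> < e)"

definition der_pt :: "rule \<Rightarrow> nat \<Rightarrow> real list \<Rightarrow> real list \<Rightarrow> nat \<Rightarrow> bool" where
  "der_pt C n lam R i \<longleftrightarrow> (\<lambda>t. C lam (R[i := t])) differentiable (at (R ! i))
        \<and> pderiv_rule C lam R i > 0
        \<and> (\<forall>e>0. \<exists>d>0. \<forall>R'. length R' = n \<and> close d R R' \<longrightarrow>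
               \<bar>pderiv_rule C lam R' i - pderiv_rule C lam R i\<bar> < e)"

lemma A2_alt: "A2 C \<longleftrightarrow> (\<forall>n lam R. admissible n lam \<and> length R = n \<longrightarrow> cont_pt C n lam R)
   \<and> (\<forall>n lam R i. admissible n lam \<and> length R = n \<and> i < n \<longrightarrow> der_pt C n lam R i)"
  unfolding A2_def cont_pt_def der_pt_def by blast

lemma cont_ptI: "((\<lambda>x. C (fst x) (snd x)) \<longlongrightarrow> C lam R) (nbhd n lam R) \<Longrightarrow> cont_pt C n lam R"
  unfolding cont_pt_def by (rule cont_from_tendsto)

lemma der_ptI:
  assumes adm: "admissible n lam" and len: "length R = n" and i: "i < n"
    and hD: "\<And>R'. length R' = n \<Longrightarrow> ((\<lambda>t. C lam (R'[i:=t])) has_real_derivative D lam R' i) (at (R'!i))"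
    and pos: "D lam R i > 0"
    and T: "((\<lambda>x. D (fst x) (snd x) i) \<longlongrightarrow> D lam R i) (nbhd n lam R)"
  shows "der_pt C n lam R i"
proof -
  have pd: "pderiv_rule C lam R' i = D lam R' i" if "length R' = n" for R'
    unfolding pderiv_rule_def using DERIV_imp_deriv[OF hD[OF that]] .
  show ?thesis unfolding der_pt_def
  proof (intro conjI)
    show "(\<lambda>t. C lam (R[i := t])) differentiable at (R ! i)"
      by (rule differentiableI[OF has_field_derivative_imp_has_derivative[OF hD[OF len]]])
    show "pderiv_rule C lam R i > 0" using pd[OF len] pos by simp
    show "\<forall>e>0. \<exists>d>0. \<forall>R'. length R' = n \<and> close d R R' \<longrightarrow>
               \<bar>pderiv_rule C lam R' i - pderiv_rule C lam R i\<bar> < e"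
      using dcont_from_tendsto[OF adm, of "\<lambda>l r. D l r i" R, OF T] pd len by auto
  qed
qed

definition agree :: "nat \<Rightarrow> rule \<Rightarrow> rule \<Rightarrow> bool" where
  "agree n C C' \<longleftrightarrow> (\<forall>l r. admissible n l \<longrightarrow> length r = n \<longrightarrow> C l r = C' l r)"

lemma cont_pt_agree: "agree n C C' \<Longrightarrow> admissible n lam \<Longrightarrow> length R = n \<Longrightarrow> cont_pt C n lam R = cont_pt C' n lam R"
  unfolding agree_def cont_pt_def by auto

lemma der_pt_agree:
  assumes "agree n C C'" "admissible n lam" "length R = n"
  shows "der_pt C n lam R i = der_pt C' n lam R i"
proof -
  have f: "(\<lambda>t. C lam (R'[i := t])) = (\<lambda>t. C' lam (R'[i := t]))" if "length R' = n" for R'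
    using assms that unfolding agree_def by auto
  have p: "pderiv_rule C lam R' i = pderiv_rule C' lam R' i" if "length R' = n" for R'
    unfolding pderiv_rule_def f[OF that] ..
  show ?thesis unfolding der_pt_def using f[OF assms(3)] p assms(3) by auto
qed


lemma sum_list_tendsto:
  assumes adm: "admissible n lam"
  shows "((\<lambda>x. sum_list (fst x)) \<longlongrightarrow> sum_list lam) (nbhd n lam R)"
proof -
  have ev: "eventually (\<lambda>x. (\<Sum>k<n. fst x ! k) = sum_list (fst x)) (nbhd n lam R)"
    using nbhd_ev[of n lam R] by eventually_elim (rule sum_adm, simp)
  have ln: "length lam = n" using adm unfolding admissible_def by simp
  have "((\<lambda>x. (\<Sum>k<n. fst x ! k)) \<longlongrightarrow> (\<Sum>k<n. lam ! k)) (nbhd n lam R)"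
    by (intro tendsto_sum nbhd_fst) (simp add: ln)
  then show ?thesis using tendsto_cong[OF ev] sum_adm[OF adm] by simp
qed

lemma lin_tendsto:
  assumes adm: "admissible n lam" and len: "length R = n"
  shows "((\<lambda>x. lin_rule (fst x) (snd x)) \<longlongrightarrow> lin_rule lam R) (nbhd n lam R)"
proof -
  have ln: "length lam = n" using adm unfolding admissible_def by simp
  have ev: "eventually (\<lambda>x. (\<Sum>k<n. fst x ! k * snd x ! k) / sum_list (fst x) = lin_rule (fst x) (snd x)) (nbhd n lam R)"
    using nbhd_ev[of n lam R] by eventually_elim (simp add: lin_form)
  have "((\<lambda>x. (\<Sum>k<n. fst x ! k * snd x ! k) / sum_list (fst x)) \<longlongrightarrow> (\<Sum>k<n. lam ! k * R ! k) / sum_list lam) (nbhd n lam R)"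
    using sum_list_pos_adm[OF adm]
    by (intro tendsto_divide tendsto_sum tendsto_mult nbhd_fst nbhd_snd sum_list_tendsto adm) (auto simp: ln len)
  then show ?thesis using tendsto_cong[OF ev] by (simp add: lin_form len)
qed

lemma q_tendsto: "(f \<longlongrightarrow> a) F \<Longrightarrow> ((\<lambda>x. q (f x)) \<longlongrightarrow> q a) F"
  unfolding q_exp by (auto intro!: tendsto_intros)

lemma qinv_tendsto: "(f \<longlongrightarrow> a) F \<Longrightarrow> a > 0 \<Longrightarrow> ((\<lambda>x. qinv (f x)) \<longlongrightarrow> qinv a) F"
  unfolding qinv_def log_def by (auto intro!: tendsto_intros)

lemma NumG_tendsto:
  assumes adm: "admissible n lam" and len: "length R = n"
  shows "((\<lambda>x. NumG \<eta> (fst x) (snd x)) \<longlongrightarrow> NumG \<eta> lam R) (nbhd n lam R)"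
proof -
  have ln: "length lam = n" using adm unfolding admissible_def by simp
  have lp: "k < n \<Longrightarrow> lam!k > 0" for k using adm unfolding admissible_def by auto
  have ev: "eventually (\<lambda>x. (\<Sum>k<n. fst x!k * (q (snd x!k) + \<eta> * (ln (sum_list (fst x)) - ln (fst x!k)))) = NumG \<eta> (fst x) (snd x)) (nbhd n lam R)"
    using nbhd_ev[of n lam R] by eventually_elim (simp add: NumG_def)
  have "((\<lambda>x. (\<Sum>k<n. fst x!k * (q (snd x!k) + \<eta> * (ln (sum_list (fst x)) - ln (fst x!k))))) \<longlongrightarrow>
        (\<Sum>k<n. lam!k * (q (R!k) + \<eta> * (ln (sum_list lam) - ln (lam!k))))) (nbhd n lam R)"
    using sum_list_pos_adm[OF adm]
    by (intro tendsto_sum tendsto_mult tendsto_add tendsto_diff tendsto_const tendsto_ln q_tendsto nbhd_fst nbhd_snd sum_list_tendsto adm)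
      (auto simp: ln len dest!: lp)
  then show ?thesis using tendsto_cong[OF ev] by (simp add: NumG_def len)
qed

lemma Gq_pts:
  assumes eta: "\<eta> \<ge> 0" and adm: "admissible n lam" and len: "length R = n"
  shows "cont_pt (Gq \<eta>) n lam R \<and> (\<forall>i<n. der_pt (Gq \<eta>) n lam R i)"
proof (intro conjI allI impI)
  have Spos: "sum_list lam > 0" by (rule sum_list_pos_adm[OF adm])
  have Npos: "NumG \<eta> lam R > 0" by (rule NumG_pos[OF eta adm len])
  show "cont_pt (Gq \<eta>) n lam R"
    unfolding Gq_def
    by (intro cont_ptI qinv_tendsto tendsto_divide NumG_tendsto sum_list_tendsto adm len)
      (use Spos Npos in auto)
  fix i assume i: "i < n"
  have ln: "length lam = n" using adm unfolding admissible_def by simp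
  have lp: "lam!i > 0" using adm i unfolding admissible_def by auto
  show "der_pt (Gq \<eta>) n lam R i"
  proof (rule der_ptI[OF adm len i, where D = "DG \<eta>"])
    show "((\<lambda>t. Gq \<eta> lam (R'[i := t])) has_real_derivative DG \<eta> lam R' i) (at (R' ! i))"
      if "length R' = n" for R' by (rule Gq_deriv[OF eta adm that i])
    show "DG \<eta> lam R i > 0" unfolding DG_def using lp Npos q_pos[of "R!i"] by simp
    show "((\<lambda>x. DG \<eta> (fst x) (snd x) i) \<longlongrightarrow> DG \<eta> lam R i) (nbhd n lam R)"
      unfolding DG_def
      by (intro tendsto_divide tendsto_mult q_tendsto nbhd_fst nbhd_snd NumG_tendsto adm len)
        (use Npos i ln len in auto)
  qed
qed

lemma lin_pts:
  assumes adm: "admissible n lam" and len: "length R = n"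
  shows "cont_pt lin_rule n lam R \<and> (\<forall>i<n. der_pt lin_rule n lam R i)"
proof (intro conjI allI impI)
  have Spos: "sum_list lam > 0" by (rule sum_list_pos_adm[OF adm])
  show "cont_pt lin_rule n lam R" by (intro cont_ptI lin_tendsto adm len)
  fix i assume i: "i < n"
  have ln: "length lam = n" using adm unfolding admissible_def by simp
  have lp: "lam!i > 0" using adm i unfolding admissible_def by auto
  show "der_pt lin_rule n lam R i"
  proof (rule der_ptI[OF adm len i, where D = "\<lambda>l r i. l!i / sum_list l"])
    show "((\<lambda>t. lin_rule lam (R'[i := t])) has_real_derivative lam!i / sum_list lam) (at (R' ! i))"
      if "length R' = n" for R' by (rule lin_deriv[OF adm that i])
    show "lam!i / sum_list lam > 0" using lp Spos by simp
    show "((\<lambda>x. fst x ! i / sum_list (fst x)) \<longlongrightarrow> lam!i / sum_list lam) (nbhd n lam R)"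
      by (intro tendsto_divide nbhd_fst sum_list_tendsto adm) (use Spos i ln in auto)
  qed
qed

lemma lin_A2: "A2 lin_rule"
  unfolding A2_alt using lin_pts by blast

lemma Gq_A2: "\<eta> \<ge> 0 \<Longrightarrow> A2 (Gq \<eta>)"
  unfolding A2_alt using Gq_pts by blast

lemma entropy_A2: "\<eta> \<ge> 0 \<Longrightarrow> A2 (entropy_rule \<eta>)"
proof -
  assume eta: "\<eta> \<ge> 0"
  have ag: "agree n (entropy_rule \<eta>) (Gq \<eta>)" for n
    unfolding agree_def using entropy_form by blast
  show ?thesis unfolding A2_alt
    using Gq_pts[OF eta] cont_pt_agree[OF ag] der_pt_agree[OF ag] by blast
qed

lemma mixed_A2: "A2 mixed_rule"
proof -
  have pts: "cont_pt mixed_rule n lam R \<and> (\<forall>i<n. der_pt mixed_rule n lam R i)"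
    if adm: "admissible n lam" and len: "length R = n" for n lam R
  proof (cases "n \<in> {1,2}")
    case True
    have ag: "agree n mixed_rule (Gq 0)" unfolding agree_def using mixed_12 True by auto
    show ?thesis using Gq_pts[of 0, OF _ adm len] cont_pt_agree[OF ag adm len] der_pt_agree[OF ag adm len] by simp
  next
    case False
    have ag: "agree n mixed_rule lin_rule" unfolding agree_def using mixed_3 False by auto
    show ?thesis using lin_pts[OF adm len] cont_pt_agree[OF ag adm len] der_pt_agree[OF ag adm len] by simp
  qed
  show ?thesis unfolding A2_alt using pts by blast
qed


lemma lin_A1': "A1 lin_rule"
  unfolding A1_def using lin_A1 by blast

lemma mixed_A1: "A1 mixed_rule"
  unfolding A1_def
proof (intro allI impI)
  fix n lam r assume adm: "admissible n lam"
  show "mixed_rule lam (replicate n r) = r"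
  proof (cases "n \<in> {1,2}")
    case True then show ?thesis using mixed_12[of "replicate n r" lam] Gq0_A1[OF adm] by simp
  next
    case False then show ?thesis using mixed_3[of "replicate n r" lam] lin_A1[OF adm] by simp
  qed
qed

lemma lin_A3': "A3 lin_rule"
  unfolding A3_def using lin_A3 by blast

lemma top_adm:
  assumes P: "ordered_partition n Bs" and adm: "admissible n lam"
  shows "admissible (length Bs) (map (\<lambda>B. sum_list (map ((!) lam) B)) Bs)"
proof -
  have "Bs \<noteq> []"
  proof
    assume "Bs = []"
    then have "{..<n} = {}" using P unfolding ordered_partition_def by simp
    then show False using adm unfolding admissible_def by (simp add: lessThan_empty_iff)
  qed
  moreover have "sum_list (map ((!) lam) B) > 0" if "B \<in> set Bs" for B
    using sum_list_pos_adm[OF block_facts(1)[OF P adm that]] .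
  ultimately show ?thesis unfolding admissible_def by (auto simp: Suc_le_eq)
qed

lemma entropy_A3: "\<eta> \<ge> 0 \<Longrightarrow> A3 (entropy_rule \<eta>)"
  unfolding A3_def
proof (intro allI impI)
  fix n lam Bs and R :: "real list" assume eta: "\<eta> \<ge> 0" and H: "admissible n lam \<and> length R = n \<and> ordered_partition n Bs"
  then have adm: "admissible n lam" and len: "length R = n" and P: "ordered_partition n Bs" by auto
  have inner: "map (\<lambda>B. entropy_rule \<eta> (map ((!) lam) B) (map ((!) R) B)) Bs
      = map (\<lambda>B. Gq \<eta> (map ((!) lam) B) (map ((!) R) B)) Bs"
    using block_facts(1)[OF P adm] by (intro map_cong refl entropy_form) auto
  show "entropy_rule \<eta> lam R =
      entropy_rule \<eta> (map (\<lambda>B. sum_list (map ((!) lam) B)) Bs)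
        (map (\<lambda>B. entropy_rule \<eta> (map ((!) lam) B) (map ((!) R) B)) Bs)"
    unfolding inner entropy_form[OF adm len] Gq_A3[OF eta adm len P]
    by (rule entropy_form[OF top_adm[OF P adm], symmetric]) simp
qed

lemma E_ratio: "E x y / (1 - E x y) = 10 powr ((x - y) / 400)"
proof -
  define p where "p = (10::real) powr ((y - x) / 400)"
  have p: "p > 0" unfolding p_def by simp
  have "10 powr ((x - y) / 400) = 1 / p" unfolding p_def
    by (simp add: powr_minus_divide[symmetric] minus_divide_left)
  moreover have "E x y / (1 - E x y) = 1 / p"
    unfolding E_def p_def[symmetric] using p by (simp add: field_simps)
  ultimately show ?thesis by simp
qed

lemma A4I:
  fixes C :: rule
  assumes eta: "\<eta> \<ge> 0" and ag: "\<And>t y. C [1,1] [t,y] = Gq \<eta> [1,1] [t,y]"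
  shows "A4 C"
  unfolding A4_def
proof (intro allI)
  fix x y :: real
  have adm: "admissible 2 [1,1]" by (simp add: admissible_def)
  have da: "((\<lambda>t. C [1,1] [t,y]) has_real_derivative DG \<eta> [1,1] [x,y] 0) (at x)"
    using Gq_deriv[OF eta adm, of "[x,y]" 0] by (simp add: ag)
  have db: "((\<lambda>s. C [1,1] [x,s]) has_real_derivative DG \<eta> [1,1] [x,y] 1) (at y)"
    using Gq_deriv[OF eta adm, of "[x,y]" 1] by (simp add: ag)
  have N: "NumG \<eta> [1,1] [x,y] > 0" by (rule NumG_pos[OF eta adm]) simp
  have "DG \<eta> [1,1] [x,y] 0 / DG \<eta> [1,1] [x,y] 1 = q x / q y"
    unfolding DG_def using N q_pos[of x] q_pos[of y] by (simp add: field_simps)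
  also have "\<dots> = 10 powr ((x - y) / 400)"
    unfolding q_def by (simp add: powr_diff[symmetric] diff_divide_distrib)
  finally have r: "DG \<eta> [1,1] [x,y] 0 / DG \<eta> [1,1] [x,y] 1 = E x y / (1 - E x y)" using E_ratio by simp
  show "\<exists>a b. ((\<lambda>t. C [1, 1] [t, y]) has_real_derivative a) (at x) \<and>
             ((\<lambda>s. C [1, 1] [x, s]) has_real_derivative b) (at y) \<and>
             a / b = E x y / (1 - E x y) \<and> E x y / (1 - E x y) = 10 powr ((x - y) / 400)"
    using da db r E_ratio by blast
qed

lemma mixed_A4: "A4 mixed_rule"
  by (rule A4I[of 0]) (simp_all add: mixed_12)

lemma entropy_A4: "\<eta> \<ge> 0 \<Longrightarrow> A4 (entropy_rule \<eta>)"
  by (rule A4I[of \<eta>]) (auto intro!: entropy_form simp: admissible_def)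

lemma lin_not_A4: "\<not> A4 lin_rule"
proof
  assume "A4 lin_rule"
  then obtain a b where da: "((\<lambda>t. lin_rule [1,1] [t,0]) has_real_derivative a) (at 400)"
    and db: "((\<lambda>s. lin_rule [1,1] [400,s]) has_real_derivative b) (at 0)"
    and r: "a / b = E 400 0 / (1 - E 400 0)" unfolding A4_def by blast
  have adm: "admissible 2 [1,1]" by (simp add: admissible_def)
  have da': "((\<lambda>t. lin_rule [1,1] [t,0]) has_real_derivative 1/2) (at 400)"
    using lin_deriv[OF adm, of "[400,0]" 0 400] by simp
  have db': "((\<lambda>s. lin_rule [1,1] [400,s]) has_real_derivative 1/2) (at 0)"
    using lin_deriv[OF adm, of "[400,0]" 1 0] by simp
  have "a = 1/2" using DERIV_unique[OF da da'] .
  moreover have "b = 1/2" using DERIV_unique[OF db db'] .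
  ultimately have "a / b = 1" by simp
  then have "(1::real) = 10" using r E_ratio[of 400 0] by simp
  then show False by simp
qed

lemma entropy_not_A1: "\<eta> > 0 \<Longrightarrow> \<not> A1 (entropy_rule \<eta>)"
proof
  assume eta: "\<eta> > 0" and "A1 (entropy_rule \<eta>)"
  have adm: "admissible 2 [1,1]" by (simp add: admissible_def)
  have e1: "entropy_rule \<eta> [1,1] (replicate 2 0) = 0" using \<open>A1 _\<close> adm unfolding A1_def by blast
  have e2: "entropy_rule \<eta> [1,1] (replicate 2 0) = Gq \<eta> [1,1] [0,0]"
    using entropy_form[OF adm, of "[0,0]"] by (simp add: numeral_2_eq_2)
  have nf: "NumG \<eta> [1,1] [0,0] / sum_list [1,1] = 1 + \<eta> * ln 2"
    unfolding NumG_def by (simp add: q_def numeral_2_eq_2)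
  have e3: "Gq \<eta> [1,1] [0,0] = qinv (1 + \<eta> * ln 2)"
    unfolding Gq_def nf by (rule refl)
  have "qinv (1 + \<eta> * ln 2) = 0" using e1 e2 e3 by metis
  moreover have "0 < log 10 (1 + \<eta> * ln 2)" using eta
    by (subst zero_less_log_cancel_iff) (auto intro: add_pos_pos)
  ultimately show False unfolding qinv_def by simp
qed


lemma mixed_not_A3: "\<not> A3 mixed_rule"
proof
  assume A: "A3 mixed_rule"
  have adm: "admissible 3 [1,1,1]" by (simp add: admissible_def)
  have s3: "{..<3::nat} = {0,1,2}" by auto
  have P: "ordered_partition 3 [[0,1],[2]]"
    unfolding ordered_partition_def s3 by auto
  have eq: "mixed_rule [1,1,1] [0,0,400] = mixed_rule [2,1] [mixed_rule [1,1] [0,0], mixed_rule [1] [400]]"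
    using A[unfolded A3_def, rule_format, of 3 "[1,1,1]" "[0,0,400]" "[[0,1],[2]]"] adm P by simp
  have m1: "mixed_rule [1,1] [0,0] = 0" by (simp add: mixed_rule_def q_def qinv_def)
  have m2: "mixed_rule [1] [400] = 400" by (simp add: mixed_rule_def q_def qinv_def)
  have m3: "mixed_rule [2,1] [0,400] = 400 * log 10 4" by (simp add: mixed_rule_def q_def qinv_def)
  have m0: "mixed_rule [1,1,1] [0,0,400] = 400 / 3" by (simp add: mixed_rule_def)
  have "log 10 4 = 1/3" using eq m0 m1 m2 m3 by simp
  then have "log 10 (4^3) = 1" by (subst log_nat_power) auto
  then have "(10::real) powr (log 10 64) = 10" by simp
  then show False by simp
qed


theorem proposition4:
  shows "(A1 lin_rule \<and> A2 lin_rule \<and> A3 lin_rule \<and> \<not> A4 lin_rule)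
    \<and> (A1 mixed_rule \<and> A2 mixed_rule \<and> A4 mixed_rule \<and> \<not> A3 mixed_rule)
    \<and> (\<forall>\<eta>>0. A2 (entropy_rule \<eta>) \<and> A3 (entropy_rule \<eta>) \<and> A4 (entropy_rule \<eta>)
              \<and> \<not> A1 (entropy_rule \<eta>))"
  using lin_A1' lin_A2 lin_A3' lin_not_A4 mixed_A1 mixed_A2 mixed_A4 mixed_not_A3
    entropy_A2 entropy_A3 entropy_A4 entropy_not_A1
  by (auto simp: less_imp_le)

end
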